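(* The unique typical subrank of real $3\times3\times3$ tensors is $2$, and the unique typical subrank of real $3\times3\times4$ tensors is $2$.
   Context: For $r \geq 0$ let $I_r := \sum_{j=1}^r e_j \otimes e_j \otimes e_j$. The subrank of $T \in \mathbb{R}^{n_1} \otimes \mathbb{R}^{n_2} \otimes \mathbb{R}^{n_3}$ is $Q(T) := \max\{ r \mid \exists\ \mathbb{R}\text{-linear } \varphi_i : \mathbb{R}^{n_i} \to \mathbb{R}^r,\ (\varphi_1 \otimes \varphi_2 \otimes \varphi_3) T = I_r\}$. An integer $r$ is a typical subrank of the format $n_1\times n_2\times n_3$ if $\{T \mid Q(T) = r\}$ contains a nonempty Euclidean-open subset of $\mathbb{R}^{n_1} \otimes \mathbb{R}^{n_2} \otimes \mathbb{R}^{n_3}$. *)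

theory Defs
  imports "HOL-Analysis.Analysis"
begin

text \<open>A real tensor of format n1 x n2 x n3 is an element of real^'c^'b^'a with
  CARD('a) = n1, CARD('b) = n2, CARD('c) = n3; its entries are T$i$j$k.
  An R-linear map R^{n} \<rightarrow> R^r is given by its r x n matrix;
  a matrix is encoded as A :: nat \<Rightarrow> 'a \<Rightarrow> real, whose rows a < r are used.\<close>

definition tensor_restricts_to_unit ::
  "real^'c^'b^'a \<Rightarrow> nat \<Rightarrow> bool" where
  "tensor_restricts_to_unit T r \<longleftrightarrow>
     (\<exists>(A :: nat \<Rightarrow> 'a \<Rightarrow> real) (B :: nat \<Rightarrow> 'b \<Rightarrow> real) (C :: nat \<Rightarrow> 'c \<Rightarrow> real).
        \<forall>a<r. \<forall>b<r. \<forall>c<r.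
          (\<Sum>i\<in>UNIV. \<Sum>j\<in>UNIV. \<Sum>k\<in>UNIV. A a i * B b j * C c k * T$i$j$k)
            = (if a = b \<and> b = c then 1 else 0))"

definition subrank :: "real^'c^'b^'a \<Rightarrow> nat" where
  "subrank T = (GREATEST r. tensor_restricts_to_unit T r)"

definition typical_subrank :: "(real^'c^'b^'a) itself \<Rightarrow> nat \<Rightarrow> bool" where
  "typical_subrank _ r \<longleftrightarrow>
     (\<exists>U :: (real^'c^'b^'a) set. open U \<and> U \<noteq> {} \<and> (\<forall>T\<in>U. subrank T = r))"

end

theory Submission
  imports Defs
begin


definition Fn :: "real^'c^'b^'a \<Rightarrow> ('a \<Rightarrow> real) \<Rightarrow> ('b \<Rightarrow> real) \<Rightarrow> ('c \<Rightarrow> real) \<Rightarrow> real" where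
  "Fn T a b c = (\<Sum>i\<in>UNIV. \<Sum>j\<in>UNIV. \<Sum>k\<in>UNIV. a i * b j * c k * T$i$j$k)"

lemma restricts_Fn: "tensor_restricts_to_unit T r \<longleftrightarrow>
  (\<exists>A B C. \<forall>a<r. \<forall>b<r. \<forall>c<r. Fn T (A a) (B b) (C c) = (if a = b \<and> b = c then 1 else 0))"
  unfolding tensor_restricts_to_unit_def Fn_def by simp

lemma Fn_lin1: "Fn T (\<lambda>i. a i + x * u i) b c = Fn T a b c + x * Fn T u b c"
  by (simp add: Fn_def algebra_simps sum.distrib sum_distrib_left)
lemma Fn_lin2: "Fn T a (\<lambda>i. b i + x * u i) c = Fn T a b c + x * Fn T a u c"
  by (simp add: Fn_def algebra_simps sum.distrib sum_distrib_left)
lemma Fn_lin3: "Fn T a b (\<lambda>i. (c i - x * u i) / y) = (Fn T a b c - x * Fn T a b u) / y"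
  by (simp add: Fn_def algebra_simps sum.distrib sum_distrib_left sum_subtractf sum_divide_distrib diff_divide_distrib)

lemma crit:
  assumes h1: "Fn T a0 b0 c0 = 1" and h2: "Fn T u b0 c0 = 0" and h3: "Fn T a0 v c0 = 0"
    and h4: "Fn T u v c0 = 0" and h5: "Fn T u v c1 \<noteq> 0"
  shows "tensor_restricts_to_unit T 2"
proof -
  define \<kappa> where "\<kappa> = Fn T u v c1"
  define x where "x = - Fn T a0 v c1 / \<kappa>"
  define y where "y = - Fn T u b0 c1 / \<kappa>"
  define a' where "a' = (\<lambda>i. a0 i + x * u i)"
  define b' where "b' = (\<lambda>i. b0 i + y * v i)"
  define s where "s = Fn T a' b' c1"
  define c' where "c' = (\<lambda>i. (c1 i - s * c0 i) / \<kappa>)"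
  have k: "\<kappa> \<noteq> 0" using h5 \<kappa>_def by simp
  have e1: "Fn T a' b' c0 = 1" unfolding a'_def b'_def Fn_lin1 Fn_lin2 using h1 h2 h3 h4 by simp
  have e2: "Fn T a' v c0 = 0" unfolding a'_def b'_def Fn_lin1 Fn_lin2 using h1 h2 h3 h4 by simp
  have e3: "Fn T u b' c0 = 0" unfolding a'_def b'_def Fn_lin1 Fn_lin2 using h1 h2 h3 h4 by simp
  have e4: "Fn T a' v c1 = 0" unfolding a'_def b'_def Fn_lin1 Fn_lin2 x_def using k \<kappa>_def by simp
  have e5: "Fn T u b' c1 = 0" unfolding a'_def b'_def Fn_lin1 Fn_lin2 y_def using k \<kappa>_def by simp
  have f1: "Fn T a' b' c' = 0" unfolding c'_def Fn_lin3 using e1 s_def by simp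
  have f2: "Fn T a' v c' = 0" unfolding c'_def Fn_lin3 using e2 e4 by simp
  have f3: "Fn T u b' c' = 0" unfolding c'_def Fn_lin3 using e3 e5 by simp
  have f4: "Fn T u v c' = 1" unfolding c'_def Fn_lin3 using h4 k \<kappa>_def by simp
  show ?thesis unfolding restricts_Fn
    apply (rule exI[of _ "\<lambda>n. if n = 0 then a' else u"])
    apply (rule exI[of _ "\<lambda>n. if n = 0 then b' else v"])
    apply (rule exI[of _ "\<lambda>n. if n = 0 then c0 else c'"])
    using e1 e2 e3 h4 f1 f2 f3 f4 by (auto simp: less_2_cases_iff)
qed



lemma Fn_alt1: "Fn T a b c = (\<Sum>i\<in>UNIV. a i * (\<Sum>j\<in>UNIV. \<Sum>k\<in>UNIV. b j * c k * T$i$j$k))"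
  unfolding Fn_def by (simp add: sum_distrib_left mult.assoc)

lemma Fn_sum1: "Fn T (\<lambda>i. \<Sum>n\<in>N. l n * A n i) b c = (\<Sum>n\<in>N. l n * Fn T (A n) b c)"
proof -
  define G where "G i = (\<Sum>j\<in>UNIV. \<Sum>k\<in>UNIV. b j * c k * T$i$j$k)" for i
  have "Fn T (\<lambda>i. \<Sum>n\<in>N. l n * A n i) b c = (\<Sum>i\<in>UNIV. \<Sum>n\<in>N. l n * A n i * G i)"
    unfolding Fn_alt1 G_def sum_distrib_right by simp
  also have "\<dots> = (\<Sum>n\<in>N. \<Sum>i\<in>UNIV. l n * A n i * G i)" by (rule sum.swap)
  also have "\<dots> = (\<Sum>n\<in>N. l n * Fn T (A n) b c)"
    unfolding Fn_alt1 G_def sum_distrib_left by (simp add: mult.assoc)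
  finally show ?thesis .
qed

lemma restricts_mono:
  assumes "tensor_restricts_to_unit T r" "r' \<le> r" shows "tensor_restricts_to_unit T r'"
proof -
  from assms(1) obtain A B C where h: "\<forall>a<r. \<forall>b<r. \<forall>c<r.
          (\<Sum>i\<in>UNIV. \<Sum>j\<in>UNIV. \<Sum>k\<in>UNIV. A a i * B b j * C c k * T$i$j$k)
            = (if a = b \<and> b = c then 1 else 0)" unfolding tensor_restricts_to_unit_def by blast
  show ?thesis unfolding tensor_restricts_to_unit_def
    apply (rule exI[of _ A], rule exI[of _ B], rule exI[of _ C])
    using h assms(2) by simp
qed

lemma Fn_zero1: "Fn T (\<lambda>i. 0) b c = 0" by (simp add: Fn_def)

lemma restricts_bound:
  fixes T :: "real^'c^'b^'a"
  assumes "tensor_restricts_to_unit T r"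
  shows "r \<le> CARD('a)"
proof (rule ccontr)
  assume "\<not> r \<le> CARD('a)"
  define m where "m = Suc CARD('a)"
  have "tensor_restricts_to_unit T m" using restricts_mono[OF assms, of m] \<open>\<not> r \<le> CARD('a)\<close> m_def by simp
  then obtain A B C where ABC: "\<And>a b c. a < m \<Longrightarrow> b < m \<Longrightarrow> c < m \<Longrightarrow>
      Fn T (A a) (B b) (C c) = (if a = b \<and> b = c then 1 else 0)"
    unfolding restricts_Fn by blast
  define va where "va n = (vec_lambda (A n) :: real^'a)" for n
  show False
  proof (cases "inj_on va {..<m}")
    case False
    then obtain n1 n2 where n: "n1 < m" "n2 < m" "n1 \<noteq> n2" "va n1 = va n2"
      unfolding inj_on_def by blast
    then have "A n1 = A n2" unfolding va_def by (metis vec_lambda_inverse UNIV_I)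
    then show False using ABC[of n1 n1 n1] ABC[of n2 n1 n1] n by simp
  next
    case True
    let ?S = "va ` {..<m}"
    have "card ?S = m" using True card_image by fastforce
    then have "dependent ?S" by (intro dependent_biggerset) (simp add: m_def)
    then obtain u where u: "\<exists>v\<in>?S. u v \<noteq> 0" "(\<Sum>v\<in>?S. u v *\<^sub>R v) = 0"
      using dependent_finite[of ?S] by auto
    define l where "l n = u (va n)" for n
    have "(\<Sum>n\<in>{..<m}. l n *\<^sub>R va n) = 0"
      using u(2) sum.reindex[OF True, of "\<lambda>v. u v *\<^sub>R v"] l_def by (simp add: comp_def)
    then have z: "(\<Sum>n\<in>{..<m}. l n * A n i) = 0" for i
      by (auto simp: vec_eq_iff va_def)
    have "l b = 0" if "b < m" for b
    proof -
      have "(\<Sum>n\<in>{..<m}. l n * Fn T (A n) (B b) (C b)) = (\<Sum>n\<in>{..<m}. if n = b then l n else 0)"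
        using ABC that by (intro sum.cong) auto
      also have "\<dots> = l b" using that by simp
      finally have "l b = Fn T (\<lambda>i. \<Sum>n\<in>{..<m}. l n * A n i) (B b) (C b)"
        unfolding Fn_sum1 by simp
      also have "\<dots> = 0" unfolding z Fn_zero1 ..
      finally show ?thesis .
    qed
    then show False using u(1) l_def by auto
  qed
qed

lemma restricts_0: "tensor_restricts_to_unit T 0"
  unfolding tensor_restricts_to_unit_def by simp

lemma subrank_eq:
  fixes T :: "real^'c^'b^'a"
  shows "subrank T = r \<longleftrightarrow> tensor_restricts_to_unit T r \<and> \<not> tensor_restricts_to_unit T (Suc r)"
proof
  assume s: "subrank T = r"
  have ex: "tensor_restricts_to_unit T (subrank T)"
    unfolding subrank_def
    by (rule GreatestI_ex_nat[where b="CARD('a)"]) (use restricts_0 restricts_bound in blast)+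
  have "\<not> tensor_restricts_to_unit T (Suc r)"
  proof
    assume "tensor_restricts_to_unit T (Suc r)"
    then have "Suc r \<le> subrank T" unfolding subrank_def
      by (rule Greatest_le_nat[where b="CARD('a)"]) (use restricts_bound in blast)
    then show False using s by simp
  qed
  then show "tensor_restricts_to_unit T r \<and> \<not> tensor_restricts_to_unit T (Suc r)" using ex s by simp
next
  assume h: "tensor_restricts_to_unit T r \<and> \<not> tensor_restricts_to_unit T (Suc r)"
  show "subrank T = r" unfolding subrank_def
  proof (rule Greatest_equality)
    show "tensor_restricts_to_unit T r" using h by simp
    fix y assume "tensor_restricts_to_unit T y"
    then show "y \<le> r" using h restricts_mono by (metis not_less_eq_eq)
  qed
qed



lemma Fn_N: "Fn T a b c = (\<Sum>i\<in>UNIV. \<Sum>j\<in>UNIV. a i * b j * (\<Sum>k\<in>UNIV. c k * T$i$j$k))"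
  unfolding Fn_def by (simp add: sum_distrib_left mult_ac)

lemma three_choice:
  fixes d p q r :: real assumes "d > 0"
  shows "\<exists>\<delta>\<in>{d, d/2, d/4}. (p + \<delta>) * (q + \<delta>) - r \<noteq> 0"
proof (rule ccontr)
  assume "\<not> ?thesis"
  then have h: "(p + d) * (q + d) - r = 0" "(p + d/2) * (q + d/2) - r = 0" "(p + d/4) * (q + d/4) - r = 0"
    by auto
  have "(d/2) * (3*d/2 + p + q) = 0" using h(1) h(2) by (simp add: algebra_simps)
  then have 1: "3*d/2 + p + q = 0" using assms by simp
  have "(d/4) * (3*d/4 + p + q) = 0" using h(2) h(3) by (simp add: algebra_simps)
  then have 2: "3*d/4 + p + q = 0" using assms by simp
  show False using 1 2 assms by simp
qed

lemma two_choice: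
  fixes d p q :: real assumes "d > 0" "q \<noteq> 0"
  shows "\<exists>\<delta>\<in>{d, d/2}. p + \<delta> * q \<noteq> 0"
proof (rule ccontr)
  assume "\<not> ?thesis"
  then have "p + d * q = 0" "p + d/2 * q = 0" by auto
  then have "d * q = 0" by linarith
  then show False using assms by simp
qed

lemma small_aux:
  fixes x e :: real assumes "x \<ge> 0" "e > 0" shows "e / (3 * (x + 1)) * x < e / 3"
proof -
  have "e / (3 * (x + 1)) * x = (e / 3) * (x / (x + 1))" using assms by (simp add: field_simps)
  moreover have "x / (x + 1) < 1" using assms by simp
  then have "(e / 3) * (x / (x + 1)) < (e / 3) * 1"
    by (intro mult_strict_left_mono) (use assms in auto)
  ultimately show ?thesis by simp
qed

lemma det3_neg: "det (- (A::real^3^3)) = - det A"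
  by (simp add: det_3 algebra_simps)

lemma singular_kernel:
  fixes N :: "real^3^3" assumes "det N = 0"
  shows "\<exists>v. v \<noteq> 0 \<and> N *v v = 0"
proof -
  have "rank N < CARD(3)" using assms det_eq_0_rank by blast
  then show ?thesis using matrix_nonfull_linear_equations_eq[of N] by auto
qed

lemma G2_dense:
  fixes T0 :: "real^'c^3^3" and k1 k2 k3 :: 'c
  assumes k: "k1 \<noteq> k2" "k1 \<noteq> k3" "k2 \<noteq> k3" and e: "\<epsilon> > 0"
  shows "\<exists>T. dist T T0 < \<epsilon> \<and> tensor_restricts_to_unit T 2"
proof -
  define E1 :: "real^'c^3^3" where
    "E1 = (\<chi> i j k. if (i = 1 \<and> j = 1 \<and> k = k1) \<or> (i = 2 \<and> j = 2 \<and> k = k2) then 1 else 0)"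
  define d where "d = \<epsilon> / (3 * (norm E1 + 1))"
  have d: "d > 0"
  proof -
    have "3 * (norm E1 + 1) > 0" by (smt (verit) norm_ge_zero)
    then show ?thesis using e by (simp add: d_def)
  qed
  obtain \<delta> where \<delta>: "\<delta> \<in> {d, d/2, d/4}"
    "(T0$1$1$k1 + \<delta>) * (T0$2$2$k2 + \<delta>) - T0$2$2$k1 * T0$1$1$k2 \<noteq> 0"
    using three_choice[OF d] by blast
  define T1 where "T1 = T0 + \<delta> *\<^sub>R E1"
  have m: "T1$1$1$k1 * T1$2$2$k2 - T1$2$2$k1 * T1$1$1$k2 \<noteq> 0"
    using \<delta>(2) k by (simp add: T1_def E1_def)
  have \<delta>pos: "0 < \<delta>" "\<delta> \<le> d" using \<delta>(1) d by auto
  have dist1: "dist T1 T0 \<le> d * norm E1"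
    using \<delta>pos by (simp add: T1_def dist_norm mult_right_mono)
  define N where "N \<theta> = (\<chi> i j. cos \<theta> * T1$i$j$k1 + sin \<theta> * T1$i$j$k2 :: real^3^3)" for \<theta>
  have contg: "continuous_on {0..pi} (\<lambda>\<theta>. det (N \<theta>))"
    unfolding N_def det_3 by (intro continuous_intros) 
  have g0: "det (N pi) = - det (N 0)"
  proof -
    have "N pi = - N 0" by (simp add: N_def vec_eq_iff)
    then show ?thesis by (simp add: det3_neg)
  qed
  obtain \<theta> where \<theta>: "det (N \<theta>) = 0"
  proof (cases "det (N 0) \<ge> 0")
    case True
    then show ?thesis using IVT2'[of "\<lambda>\<theta>. det (N \<theta>)" pi 0 0] g0 contg that by force
  next
    case False
    then show ?thesis using IVT'[of "\<lambda>\<theta>. det (N \<theta>)" 0 0 pi] g0 contg that by force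
  qed
  have Nnz: "N \<theta> \<noteq> 0"
  proof
    assume z: "N \<theta> = 0"
    have z1: "cos \<theta> * T1$1$1$k1 + sin \<theta> * T1$1$1$k2 = 0"
      using arg_cong[OF z, of "\<lambda>M. M$1$1"] by (simp add: N_def)
    have z2: "cos \<theta> * T1$2$2$k1 + sin \<theta> * T1$2$2$k2 = 0"
      using arg_cong[OF z, of "\<lambda>M. M$2$2"] by (simp add: N_def)
    define mm where "mm = T1$1$1$k1 * T1$2$2$k2 - T1$2$2$k1 * T1$1$1$k2"
    have "cos \<theta> * mm = 0"
    proof -
      have "cos \<theta> * mm = T1$2$2$k2 * (cos \<theta> * T1$1$1$k1 + sin \<theta> * T1$1$1$k2)
          - T1$1$1$k2 * (cos \<theta> * T1$2$2$k1 + sin \<theta> * T1$2$2$k2)"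
        unfolding mm_def by (simp add: algebra_simps)
      then show ?thesis using z1 z2 by simp
    qed
    moreover have "sin \<theta> * mm = 0"
    proof -
      have "sin \<theta> * mm = T1$1$1$k1 * (cos \<theta> * T1$2$2$k1 + sin \<theta> * T1$2$2$k2)
          - T1$2$2$k1 * (cos \<theta> * T1$1$1$k1 + sin \<theta> * T1$1$1$k2)"
        unfolding mm_def by (simp add: algebra_simps)
      then show ?thesis using z1 z2 by simp
    qed
    ultimately have "cos \<theta> = 0" "sin \<theta> = 0" using m mm_def by auto
    then show False using sin_cos_squared_add[of \<theta>] by simp
  qed
  obtain v where v: "v \<noteq> 0" "N \<theta> *v v = 0" using singular_kernel[OF \<theta>] by blast
  obtain u where u: "u \<noteq> 0" "transpose (N \<theta>) *v u = 0"
    using singular_kernel[of "transpose (N \<theta>)"] \<theta> by auto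
  obtain p q where pq: "N \<theta> $ p $ q \<noteq> 0"
    using Nnz by (metis vec_eq_iff zero_index)
  define c0 where "c0 k = (if k = k1 then cos \<theta> else if k = k2 then sin \<theta> else 0)" for k
  define c1 where "c1 k = (if k = k3 then 1 else (0::real))" for k
  define a0 where "a0 i = (if i = p then 1 / (N \<theta> $ p $ q) else 0)" for i
  define b0 where "b0 j = (if j = q then 1 else (0::real))" for j
  define E2 :: "real^'c^3^3" where "E2 = (\<chi> i j k. if k = k3 then u$i * v$j else 0)"
  define d' where "d' = \<epsilon> / (3 * (norm E2 + 1))"
  have d': "d' > 0"
  proof -
    have "3 * (norm E2 + 1) > 0" by (smt (verit) norm_ge_zero)
    then show ?thesis using e by (simp add: d'_def)
  qed
  define K where "K = Fn T1 (\<lambda>i. u$i) (\<lambda>j. v$j) c1"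
  define S where "S = (\<Sum>i\<in>UNIV. \<Sum>j\<in>UNIV. (u$i)^2 * (v$j)^2)"
  have Spos: "S \<noteq> 0"
  proof -
    obtain i0 where "u$i0 \<noteq> 0" using u(1) by (metis vec_eq_iff zero_index)
    obtain j0 where "v$j0 \<noteq> 0" using v(1) by (metis vec_eq_iff zero_index)
    have "0 < (u$i0)^2 * (v$j0)^2" using \<open>u$i0 \<noteq> 0\<close> \<open>v$j0 \<noteq> 0\<close> by simp
    also have "\<dots> \<le> (\<Sum>j\<in>UNIV. (u$i0)^2 * (v$j)^2)"
      by (rule member_le_sum) auto
    also have "\<dots> \<le> S" unfolding S_def
      by (rule member_le_sum[where f="\<lambda>i. \<Sum>j\<in>UNIV. (u$i)^2 * (v$j)^2"]) (auto intro: sum_nonneg)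
    finally show ?thesis by simp
  qed
  obtain \<delta>' where \<delta>': "\<delta>' \<in> {d', d'/2}" "K + \<delta>' * S \<noteq> 0"
    using two_choice[OF d' Spos] by blast
  define T2 where "T2 = T1 + \<delta>' *\<^sub>R E2"
  have \<delta>'pos: "0 < \<delta>'" "\<delta>' \<le> d'" using \<delta>'(1) d' by auto
  have dist2: "dist T2 T1 \<le> d' * norm E2"
    using \<delta>'pos by (simp add: T2_def dist_norm mult_right_mono)
  have Nsum: "(\<Sum>k\<in>UNIV. c0 k * T2$i$j$k) = N \<theta> $ i $ j" for i j
  proof -
    have "(\<Sum>k\<in>UNIV. c0 k * T2$i$j$k) = (\<Sum>k\<in>UNIV. c0 k * T1$i$j$k)"
      by (intro sum.cong) (auto simp: T2_def E2_def c0_def k)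
    also have "\<dots> = (\<Sum>k\<in>UNIV. (if k = k1 then cos \<theta> * T1$i$j$k1 else 0) + (if k = k2 then sin \<theta> * T1$i$j$k2 else 0))"
      by (intro sum.cong) (auto simp: c0_def k)
    also have "\<dots> = N \<theta> $ i $ j" by (simp add: sum.distrib N_def)
    finally show ?thesis .
  qed
  have FN: "Fn T2 a b c0 = (\<Sum>i\<in>UNIV. \<Sum>j\<in>UNIV. a i * b j * N \<theta> $ i $ j)" for a b
    unfolding Fn_N Nsum ..
  have h1: "Fn T2 a0 b0 c0 = 1"
  proof -
    have e: "a0 i * b0 j * N \<theta> $ i $ j = (if j = q then (if i = p then 1 else 0) else 0)" for i j
      using pq by (auto simp: a0_def b0_def)
    show ?thesis unfolding FN e by simp
  qed
  have h2: "Fn T2 (\<lambda>i. u$i) b0 c0 = 0"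
  proof -
    have e: "u$i * b0 j * N \<theta> $ i $ j = (if j = q then u$i * N \<theta> $ i $ q else 0)" for i j
      by (simp add: b0_def)
    have "Fn T2 (\<lambda>i. u$i) b0 c0 = (\<Sum>i\<in>UNIV. u$i * N \<theta> $ i $ q)"
      unfolding FN e by simp
    also have "\<dots> = (transpose (N \<theta>) *v u) $ q"
      by (simp add: matrix_vector_mult_def transpose_def mult.commute)
    finally show ?thesis using u by simp
  qed
  have h3: "Fn T2 a0 (\<lambda>j. v$j) c0 = 0"
  proof -
    have e: "(\<Sum>j\<in>UNIV. a0 i * v$j * N \<theta> $ i $ j) = (if i = p then (N \<theta> *v v) $ p / N \<theta> $ p $ q else 0)" for i
      by (simp add: a0_def matrix_vector_mult_def sum_divide_distrib mult.commute)
    have "Fn T2 a0 (\<lambda>j. v$j) c0 = (N \<theta> *v v) $ p / N \<theta> $ p $ q"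
      unfolding FN e by simp
    then show ?thesis using v by simp
  qed
  have h4: "Fn T2 (\<lambda>i. u$i) (\<lambda>j. v$j) c0 = 0"
  proof -
    have "Fn T2 (\<lambda>i. u$i) (\<lambda>j. v$j) c0 = (\<Sum>i\<in>UNIV. u$i * (N \<theta> *v v) $ i)"
      unfolding FN by (simp add: matrix_vector_mult_def sum_distrib_left mult_ac)
    then show ?thesis using v by simp
  qed
  have h5: "Fn T2 (\<lambda>i. u$i) (\<lambda>j. v$j) c1 \<noteq> 0"
  proof -
    have lin: "Fn T2 a b c = Fn T1 a b c + \<delta>' * Fn E2 a b c" for a b c
      unfolding Fn_def T2_def by (simp add: algebra_simps sum.distrib sum_distrib_left)
    have e0: "c1 k * E2$i$j$k = (if k = k3 then u$i * v$j else 0)" for i j k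
      by (simp add: c1_def E2_def)
    have e: "(\<Sum>k\<in>UNIV. c1 k * E2$i$j$k) = u$i * v$j" for i j
      unfolding e0 by simp
    have "Fn E2 (\<lambda>i. u$i) (\<lambda>j. v$j) c1 = S"
      unfolding Fn_N e S_def by (simp add: power2_eq_square mult_ac)
    then have "Fn T2 (\<lambda>i. u$i) (\<lambda>j. v$j) c1 = K + \<delta>' * S"
      unfolding lin K_def by simp
    then show ?thesis using \<delta>' by simp
  qed
  have "tensor_restricts_to_unit T2 2" by (rule crit[OF h1 h2 h3 h4 h5])
  moreover have "dist T2 T0 < \<epsilon>"
  proof -
    have "dist T2 T0 \<le> dist T2 T1 + dist T1 T0" by (rule dist_triangle)
    also have "\<dots> \<le> d' * norm E2 + d * norm E1" using dist1 dist2 by simp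
    also have "\<dots> < \<epsilon>/3 + \<epsilon>/3"
    proof -
      have "d' * norm E2 < \<epsilon>/3" unfolding d'_def using e small_aux by simp
      moreover have "d * norm E1 < \<epsilon>/3" unfolding d_def using e small_aux by simp
      ultimately show ?thesis by simp
    qed
    finally show ?thesis using e by simp
  qed
  ultimately show ?thesis by blast
qed



lemma prod_bound: fixes x y a b :: real
  assumes "\<bar>x\<bar> \<le> a" "\<bar>y\<bar> \<le> b" shows "\<bar>x * y\<bar> \<le> a * b"
  unfolding abs_mult using assms by (intro mult_mono) auto

lemma det_pos_aux: fixes n11 n22 n12 n21 :: real
  assumes "n11 \<ge> 2/5" "n22 \<ge> 9/10" "\<bar>n12\<bar> \<le> 1/10" "\<bar>n21\<bar> \<le> 1/10"
  shows "n11 * n22 - n12 * n21 > 0"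
proof -
  have "n11 * n22 \<ge> 2/5 * (9/10)" using assms by (intro mult_mono) auto
  moreover have "\<bar>n12 * n21\<bar> \<le> 1/10 * (1/10)" using assms by (intro prod_bound) auto
  ultimately show ?thesis by linarith
qed

lemma det_neg_aux: fixes n11 n22 n12 n21 :: real
  assumes "n11 \<le> - 2/5" "n22 \<ge> 9/10" "\<bar>n12\<bar> \<le> 1/10" "\<bar>n21\<bar> \<le> 1/10"
  shows "n11 * n22 - n12 * n21 < 0"
proof -
  have "(-n11) * n22 \<ge> 2/5 * (9/10)" using assms by (intro mult_mono) auto
  moreover have "\<bar>n12 * n21\<bar> \<le> 1/10 * (1/10)" using assms by (intro prod_bound) auto
  ultimately show ?thesis by linarith
qed

lemma key_aux: fixes n22 n12 n21 s11 s12 s21 s22 :: real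
  assumes "\<bar>n22 - 1\<bar> \<le> 1/10" "\<bar>n12\<bar> \<le> 1/10" "\<bar>n21\<bar> \<le> 1/10"
    "\<bar>s11 - 1\<bar> \<le> 1/10" "\<bar>s12\<bar> \<le> 1/10" "\<bar>s21\<bar> \<le> 1/10" "\<bar>s22\<bar> \<le> 1/10"
  shows "n22 * n22 * s11 - n22 * n21 * s12 - n12 * n22 * s21 + n12 * n21 * s22 > 0"
proof -
  have p1: "n22 \<ge> 9/10" using assms(1) unfolding abs_le_iff by linarith
  have p2: "s11 \<ge> 9/10" using assms(4) unfolding abs_le_iff by linarith
  have p3: "\<bar>n22\<bar> \<le> 11/10" using assms(1) unfolding abs_le_iff by linarith
  have a: "n22 * n22 \<ge> 9/10 * (9/10)" using p1 by (intro mult_mono) auto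
  have "n22 * n22 * s11 \<ge> (9/10 * (9/10)) * (9/10)" using p1 p2 a by (intro mult_mono) auto
  moreover have "\<bar>n22 * n21 * s12\<bar> \<le> (11/10 * (1/10)) * (1/10)" using assms p3 by (intro prod_bound) auto
  moreover have "\<bar>n12 * n22 * s21\<bar> \<le> (1/10 * (11/10)) * (1/10)" using assms p3 by (intro prod_bound) auto
  moreover have "\<bar>n12 * n21 * s22\<bar> \<le> (1/10 * (1/10)) * (1/10)" using assms by (intro prod_bound) auto
  ultimately show ?thesis by linarith
qed

lemma entry_le_norm: fixes x :: "real^'c^'b^'a" shows "\<bar>x$i$j$k\<bar> \<le> norm x"
proof -
  have "\<bar>x$i$j$k\<bar> \<le> norm (x$i$j)" by (rule component_le_norm_cart)
  also have "\<dots> \<le> norm (x$i)" by (rule Finite_Cartesian_Product.norm_nth_le)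
  also have "\<dots> \<le> norm x" by (rule Finite_Cartesian_Product.norm_nth_le)
  finally show ?thesis .
qed

lemma abs_sub_aux: fixes a b e1 e2 :: real
  assumes "\<bar>a\<bar> < e1" "\<bar>b\<bar> \<le> e2" shows "\<bar>a - b\<bar> \<le> e1 + e2"
  using abs_triangle_ineq4[of a b] assms by linarith

lemma G2_open_piece:
  fixes T :: "real^'c^3^3" and k1 k2 :: 'c
  assumes k: "k1 \<noteq> k2"
    and near: "dist T (\<chi> i j k. if (i = 1 \<and> j = 1 \<and> k = k1) \<or> (i = 2 \<and> j = 2 \<and> k = k2) then 1 else 0) < 1/20"
  shows "tensor_restricts_to_unit T 2"
proof -
  define Ts :: "real^'c^3^3" where "Ts = (\<chi> i j k. if (i = 1 \<and> j = 1 \<and> k = k1) \<or> (i = 2 \<and> j = 2 \<and> k = k2) then 1 else 0)"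
  have dev: "\<bar>T$i$j$k - Ts$i$j$k\<bar> < 1/20" for i j k
  proof -
    have "\<bar>(T - Ts)$i$j$k\<bar> \<le> norm (T - Ts)" by (rule entry_le_norm)
    then show ?thesis using near unfolding Ts_def[symmetric] by (simp add: dist_norm)
  qed
  have ne12: "(1::3) \<noteq> 2" by simp
  have d1: "\<bar>T$1$1$k1 - 1\<bar> < 1/20" using dev[of 1 1 k1] by (simp add: Ts_def)
  have d2: "\<bar>T$2$2$k2 - 1\<bar> < 1/20" using dev[of 2 2 k2] by (simp add: Ts_def)
  have d3: "\<bar>T$1$1$k2\<bar> < 1/20" using dev[of 1 1 k2] k by (simp add: Ts_def)
  have d4: "\<bar>T$2$2$k1\<bar> < 1/20" using dev[of 2 2 k1] k by (simp add: Ts_def)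
  have d5: "\<bar>T$1$2$k\<bar> < 1/20" for k using dev[of 1 2 k] by (simp add: Ts_def)
  have d6: "\<bar>T$2$1$k\<bar> < 1/20" for k using dev[of 2 1 k] by (simp add: Ts_def)
  define n where "n t i j = T$i$j$k2 - t * T$i$j$k1" for t i j
  define g where "g t = n t 1 1 * n t 2 2 - n t 1 2 * n t 2 1" for t
  have tb: "\<bar>t * x\<bar> \<le> 1/2 * (1/20)" if "\<bar>t\<bar> \<le> 1/2" "\<bar>x\<bar> < 1/20" for t x :: real
    using prod_bound[of t "1/2" x "1/20"] that by simp
  have n22: "\<bar>n t 2 2 - 1\<bar> \<le> 1/10" if "\<bar>t\<bar> \<le> 1/2" for t
  proof -
    have "\<bar>(T$2$2$k2 - 1) - t * T$2$2$k1\<bar> \<le> 1/20 + 1/2 * (1/20)"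
      by (rule abs_sub_aux[OF d2 tb[OF that d4]])
    then show ?thesis unfolding n_def by (simp add: algebra_simps)
  qed
  have n12: "\<bar>n t 1 2\<bar> \<le> 1/10" if "\<bar>t\<bar> \<le> 1/2" for t
  proof -
    have "\<bar>T$1$2$k2 - t * T$1$2$k1\<bar> \<le> 1/20 + 1/2 * (1/20)"
      by (rule abs_sub_aux[OF d5 tb[OF that d5]])
    then show ?thesis unfolding n_def by simp
  qed
  have n21: "\<bar>n t 2 1\<bar> \<le> 1/10" if "\<bar>t\<bar> \<le> 1/2" for t
  proof -
    have "\<bar>T$2$1$k2 - t * T$2$1$k1\<bar> \<le> 1/20 + 1/2 * (1/20)"
      by (rule abs_sub_aux[OF d6 tb[OF that d6]])
    then show ?thesis unfolding n_def by simp
  qed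
  have n22ge: "n t 2 2 \<ge> 9/10" if "\<bar>t\<bar> \<le> 1/2" for t
    using n22[OF that] unfolding abs_le_iff by linarith
  have gl: "g (-1/2) > 0"
  proof -
    have "n (-1/2) 1 1 \<ge> 2/5" unfolding n_def using d1 d3 by linarith
    then show ?thesis unfolding g_def using n22ge[of "-1/2"] n12[of "-1/2"] n21[of "-1/2"]
      by (intro det_pos_aux) auto
  qed
  have gr: "g (1/2) < 0"
  proof -
    have "n (1/2) 1 1 \<le> - 2/5" unfolding n_def using d1 d3 by linarith
    then show ?thesis unfolding g_def using n22ge[of "1/2"] n12[of "1/2"] n21[of "1/2"]
      by (intro det_neg_aux) auto
  qed
  have contg: "continuous_on {-1/2..1/2} g"
    unfolding g_def n_def by (intro continuous_intros)
  obtain t where t: "-1/2 \<le> t" "t \<le> 1/2" "g t = 0"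
    using IVT2'[of g "1/2" 0 "-1/2"] gl gr contg by force
  have tt: "\<bar>t\<bar> \<le> 1/2" using t by simp
  define N22 where "N22 = n t 2 2"
  define N12 where "N12 = n t 1 2"
  define N21 where "N21 = n t 2 1"
  define N11 where "N11 = n t 1 1"
  have N22nz: "N22 \<noteq> 0" using n22[OF tt] unfolding N22_def by auto
  have det0: "N11 * N22 - N12 * N21 = 0" using t(3) unfolding g_def N11_def N22_def N12_def N21_def .
  define u where "u i = (if i = 1 then N22 else if i = 2 then - N12 else 0)" for i :: 3
  define v where "v i = (if i = 1 then N22 else if i = 2 then - N21 else 0)" for i :: 3
  define a0 where "a0 i = (if i = 2 then 1 / N22 else 0)" for i :: 3
  define b0 where "b0 i = (if i = 2 then 1 else (0::real))" for i :: 3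
  define c0 where "c0 k = (if k = k2 then 1 else 0) - t * (if k = k1 then 1 else 0)" for k
  define c1 where "c1 k = (if k = k1 then 1 else (0::real))" for k
  have inner0: "(\<Sum>k\<in>UNIV. c0 k * T$i$j$k) = n t i j" for i j
  proof -
    have e: "c0 k * T$i$j$k = (if k = k2 then T$i$j$k2 else 0) - (if k = k1 then t * T$i$j$k1 else 0)" for k
      by (simp add: c0_def algebra_simps)
    show ?thesis unfolding e sum_subtractf by (simp add: n_def)
  qed
  have inner1: "(\<Sum>k\<in>UNIV. c1 k * T$i$j$k) = T$i$j$k1" for i j
  proof -
    have e: "c1 k * T$i$j$k = (if k = k1 then T$i$j$k1 else 0)" for k
      by (simp add: c1_def)
    show ?thesis unfolding e by simp
  qed
  have h1: "Fn T a0 b0 c0 = 1"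
    unfolding Fn_N inner0 using N22nz by (simp add: sum_3 a0_def b0_def N22_def)
  have h2: "Fn T u b0 c0 = 0"
    unfolding Fn_N inner0 by (simp add: sum_3 u_def b0_def N22_def N12_def)
  have h3: "Fn T a0 v c0 = 0"
    unfolding Fn_N inner0 using N22nz by (simp add: sum_3 a0_def v_def N22_def N21_def)
  have h4: "Fn T u v c0 = 0"
  proof -
    have "Fn T u v c0 = N22 * (N11 * N22 - N12 * N21)"
      unfolding Fn_N inner0 by (simp add: sum_3 u_def v_def N22_def N21_def N12_def N11_def algebra_simps)
    then show ?thesis using det0 by simp
  qed
  have h5: "Fn T u v c1 \<noteq> 0"
  proof -
    have "Fn T u v c1 = N22 * N22 * T$1$1$k1 - N22 * N21 * T$1$2$k1 - N12 * N22 * T$2$1$k1 + N12 * N21 * T$2$2$k1"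
      unfolding Fn_N inner1 by (simp add: sum_3 u_def v_def algebra_simps)
    moreover have "\<dots> > 0"
      apply (rule key_aux)
      using n22[OF tt] n12[OF tt] n21[OF tt] d1 d4 d5[of k1] d6[of k1]
      by (auto simp: N22_def N12_def N21_def)
    ultimately show ?thesis by simp
  qed
  show ?thesis by (rule crit[OF h1 h2 h3 h4 h5])
qed



definition Nw :: "real^'c^3^3 \<Rightarrow> real^'c \<Rightarrow> real^3^3" where
  "Nw T w = (\<chi> i j. \<Sum>k\<in>UNIV. w$k * T$i$j$k)"

definition rank1 :: "real^3^3 \<Rightarrow> bool" where
  "rank1 M \<longleftrightarrow> (\<forall>i i' j j'. M$i$j * M$i'$j' = M$i$j' * M$i'$j)"

definition Rset :: "(real^'c^3^3) set" where
  "Rset = {T. \<exists>w. w \<noteq> 0 \<and> rank1 (Nw T w)}"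

definition idx3 :: "3 \<Rightarrow> nat" where
  "idx3 a = (if a = 1 then 0 else if a = 2 then 1 else 2)"

lemma idx3_inj: "idx3 a = idx3 b \<longleftrightarrow> a = b"
  using exhaust_3[of a] exhaust_3[of b] by (auto simp: idx3_def)

lemma idx3_lt: "idx3 a < 3" by (simp add: idx3_def)

lemma idx3_0: "idx3 a = 0 \<longleftrightarrow> a = 1" by (simp add: idx3_def)

lemma vec_eta: "vec_nth (vec_lambda f) = f" by (simp add: fun_eq_iff)

lemma prod_entry: "((X::real^3^3) ** Nw T w ** transpose Y) $ a $ b = Fn T (\<lambda>i. X$a$i) (\<lambda>j. Y$b$j) (\<lambda>k. w$k)"
  unfolding Fn_N Nw_def matrix_matrix_mult_def transpose_def
  by (simp add: sum_distrib_left sum_distrib_right mult_ac) (rule sum.swap)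

lemma Fn_lin3_sum: "Fn T a b (\<lambda>k. c1 k + c2 k + c3 k) = Fn T a b c1 + Fn T a b c2 + Fn T a b c3"
  unfolding Fn_def by (simp add: algebra_simps sum.distrib)

lemma S3_sub_R:
  fixes T :: "real^'c^3^3"
  assumes "tensor_restricts_to_unit T 3"
  shows "T \<in> Rset"
proof -
  obtain A B C where ABC: "\<And>a b c::nat. a < 3 \<Longrightarrow> b < 3 \<Longrightarrow> c < 3 \<Longrightarrow>
      Fn T (A a) (B b) (C c) = (if a = b \<and> b = c then 1 else 0)"
    using assms unfolding restricts_Fn by blast
  define Am :: "real^3^3" where "Am = (\<chi> a i. A (idx3 a) i)"
  define Bm :: "real^3^3" where "Bm = (\<chi> a i. B (idx3 a) i)"
  define wc where "wc c = (\<chi> k. C c k :: real^'c)" for c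
  define ws where "ws = (\<chi> k. C 0 k + C 1 k + C 2 k :: real^'c)"
  have P: "Am ** Nw T ws ** transpose Bm = mat 1"
  proof -
    have "(Am ** Nw T ws ** transpose Bm) $ a $ b = (if a = b then 1 else 0)" for a b
    proof -
      have "(Am ** Nw T ws ** transpose Bm) $ a $ b =
         Fn T (A (idx3 a)) (B (idx3 b)) (C 0) + Fn T (A (idx3 a)) (B (idx3 b)) (C 1) + Fn T (A (idx3 a)) (B (idx3 b)) (C 2)"
        unfolding prod_entry ws_def Am_def Bm_def by (simp add: Fn_lin3_sum vec_eta)
      also have "\<dots> = (if a = b then 1 else 0)"
        using ABC[of "idx3 a" "idx3 b" 0] ABC[of "idx3 a" "idx3 b" 1] ABC[of "idx3 a" "idx3 b" 2] idx3_lt[of a] idx3_lt[of b]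
        by (auto simp: idx3_inj)
      finally show ?thesis .
    qed
    then show ?thesis by (simp add: vec_eq_iff mat_def)
  qed
  have E0: "(Am ** Nw T (wc 0) ** transpose Bm) $ a $ b = (if a = 1 \<and> b = 1 then 1 else 0)" for a b
  proof -
    have "(Am ** Nw T (wc 0) ** transpose Bm) $ a $ b = Fn T (A (idx3 a)) (B (idx3 b)) (C 0)"
      unfolding prod_entry wc_def Am_def Bm_def by (simp add: vec_eta)
    also have "\<dots> = (if a = 1 \<and> b = 1 then 1 else 0)"
      using ABC[of "idx3 a" "idx3 b" 0] idx3_lt[of a] idx3_lt[of b] idx3_0[of a] idx3_0[of b]
      by (auto simp: idx3_inj)
    finally show ?thesis .
  qed
  have "invertible Am" using P invertible_right_inverse by (metis matrix_mul_assoc)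
  then obtain X where X: "X ** Am = mat 1" using invertible_left_inverse by blast
  have "invertible (transpose Bm)" using P invertible_left_inverse by blast
  then obtain Y where Y: "transpose Bm ** Y = mat 1" using invertible_right_inverse by blast
  define Em where "Em = Am ** Nw T (wc 0) ** transpose Bm"
  have "Nw T (wc 0) = X ** Em ** Y"
  proof -
    have "X ** Em ** Y = (X ** Am) ** Nw T (wc 0) ** (transpose Bm ** Y)"
      unfolding Em_def by (simp add: matrix_mul_assoc)
    then show ?thesis using X Y by simp
  qed
  then have Nf: "Nw T (wc 0) $ i $ j = X$i$1 * Y$1$j" for i j
    using E0 unfolding Em_def[symmetric]
    by (simp add: matrix_matrix_mult_def sum_3 if_distrib cong: if_cong)
  have r1: "rank1 (Nw T (wc 0))" unfolding rank1_def Nf by simp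
  have nz: "wc 0 \<noteq> 0"
  proof
    assume "wc 0 = 0"
    then have "Nw T (wc 0) = 0" by (simp add: Nw_def vec_eq_iff)
    then show False using E0[of 1 1] by (simp add: matrix_matrix_mult_def)
  qed
  show ?thesis unfolding Rset_def using r1 nz by blast
qed



lemma Nw_scale: "Nw T (c *\<^sub>R w) = c *\<^sub>R Nw T w"
  by (simp add: Nw_def vec_eq_iff sum_distrib_left mult_ac)

lemma rank1_scale: "rank1 M \<Longrightarrow> rank1 (c *\<^sub>R M)"
  unfolding rank1_def
proof (intro allI)
  fix i i' j j'
  assume "\<forall>i i' j j'. M $ i $ j * M $ i' $ j' = M $ i $ j' * M $ i' $ j"
  then have "M $ i $ j * M $ i' $ j' = M $ i $ j' * M $ i' $ j" by blast
  then have "c * c * (M $ i $ j * M $ i' $ j') = c * c * (M $ i $ j' * M $ i' $ j)" by simp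
  then show "(c *\<^sub>R M) $ i $ j * (c *\<^sub>R M) $ i' $ j' = (c *\<^sub>R M) $ i $ j' * (c *\<^sub>R M) $ i' $ j"
    by (simp add: mult_ac)
qed

lemma Rset_sphere: "(Rset :: (real^'c^3^3) set) = {T. \<exists>w. w \<in> sphere 0 1 \<and> (w, T) \<in> {p. rank1 (Nw (snd p) (fst p))}}"
proof (intro set_eqI iffI)
  fix T :: "real^'c^3^3"
  assume "T \<in> Rset"
  then obtain w where w: "w \<noteq> 0" "rank1 (Nw T w)" unfolding Rset_def by blast
  define w' where "w' = (1 / norm w) *\<^sub>R w"
  have "w' \<in> sphere 0 1" using w(1) by (simp add: w'_def)
  moreover have "rank1 (Nw T w')" unfolding w'_def Nw_scale by (rule rank1_scale[OF w(2)])
  ultimately show "T \<in> {T. \<exists>w. w \<in> sphere 0 1 \<and> (w, T) \<in> {p. rank1 (Nw (snd p) (fst p))}}" by auto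
next
  fix T :: "real^'c^3^3"
  assume "T \<in> {T. \<exists>w. w \<in> sphere 0 1 \<and> (w, T) \<in> {p. rank1 (Nw (snd p) (fst p))}}"
  then obtain w where "norm w = 1" "rank1 (Nw T w)" by auto
  then show "T \<in> Rset" unfolding Rset_def by (intro CollectI exI[of _ w]) auto
qed

lemma Rset_closed: "closed (Rset :: (real^'c^3^3) set)"
proof -
  have "closed {p::(real^'c) \<times> (real^'c^3^3). rank1 (Nw (snd p) (fst p))}"
    unfolding rank1_def Nw_def
    by (intro closed_Collect_all closed_Collect_eq) (simp_all add: continuous_intros)
  then show ?thesis unfolding Rset_sphere
    by (intro closed_compact_projection) (auto simp: compact_sphere)
qed



lemma linear_axis: "linear (axis i :: 'b::real_vector \<Rightarrow> 'b^'n)"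
  unfolding linear_iff by (simp add: axis_def vec_eq_iff)

lemma diff_vec:
  fixes f :: "'m::real_normed_vector \<Rightarrow> 'b::euclidean_space^'n"
  assumes "\<And>i. (\<lambda>x. f x $ i) differentiable (at x)"
  shows "f differentiable (at x)"
proof -
  have bl: "bounded_linear (axis i :: 'b \<Rightarrow> 'b^'n)" for i
    by (rule linear_conv_bounded_linear[THEN iffD1, OF linear_axis])
  have eq: "f = (\<lambda>x. \<Sum>i\<in>UNIV. axis i (f x $ i))"
    by (auto simp: fun_eq_iff vec_eq_iff axis_def)
  have "(\<lambda>x. axis i (f x $ i)) differentiable (at x)" for i
  proof -
    obtain D where "((\<lambda>x. f x $ i) has_derivative D) (at x)" using assms[of i] unfolding differentiable_def by blast
    from bounded_linear.has_derivative[OF bl this] show ?thesis unfolding differentiable_def by blast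
  qed
  then have "(\<lambda>x. \<Sum>i\<in>UNIV. axis i (f x $ i)) differentiable (at x)"
    by (intro differentiable_sum) auto
  then show ?thesis using eq by metis
qed

lemma bl_entry: "bounded_linear (\<lambda>Q::real^'c^'b^'a. Q$a$b$c)"
  by (rule bounded_linear_compose[OF bounded_linear_vec_nth bounded_linear_compose[OF bounded_linear_vec_nth bounded_linear_vec_nth]])

lemma diff_entry: "(\<lambda>Q::real^'c^'b^'a. Q$a$b$c) differentiable (at x)"
  by (rule bounded_linear_imp_differentiable[OF bl_entry])

definition Phi :: "('c \<Rightarrow> 3) \<Rightarrow> 'c \<Rightarrow> real^'c^3^3 \<Rightarrow> real^'c^3^3" where
  "Phi g k0 Q = (\<chi> i j k. if k = k0 then Q$2$i$k0 * Q$3$j$k0 - (\<Sum>k'\<in>UNIV-{k0}. Q$1$(g k')$k0 * Q$i$j$k')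
      else Q$i$j$k)"

lemma Phi_diff: "Phi g k0 differentiable (at x)"
proof -
  have "(\<lambda>Q. Phi g k0 Q $ i $ j $ k) differentiable (at x)" for i j k
  proof (cases "k = k0")
    case True
    then show ?thesis unfolding Phi_def
      by (simp add: diff_entry differentiable_diff differentiable_mult differentiable_sum)
  next
    case False
    then show ?thesis unfolding Phi_def by (simp add: diff_entry)
  qed
  then show ?thesis by (intro diff_vec)
qed

lemma inner_entry: "inner (axis a (axis b (axis c (1::real)))) (Q::real^'c^'b^'a) = Q$a$b$c"
  by (simp add: inner_axis')

lemma hyper_negligible: "negligible {Q::real^'c^'b^'a. Q$a$b$c = r}"
proof -
  have ne: "axis a (axis b (axis c (1::real))) \<noteq> (0::real^'c^'b^'a)"
    by (simp add: axis_eq_0_iff)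
  have "{Q::real^'c^'b^'a. Q$a$b$c = r} = {Q. inner (axis a (axis b (axis c (1::real)))) Q = r}"
    by (simp add: inner_entry)
  then show ?thesis using negligible_hyperplane ne by metis
qed

lemma rank1_factor:
  assumes "rank1 M"
  shows "\<exists>x y. (\<forall>i j. M$i$j = x$i * y$j) \<and> (x = 0 \<or> (\<exists>i0. x$i0 = 1))"
proof (cases "M = 0")
  case True
  then show ?thesis by (intro exI[of _ 0]) simp
next
  case False
  then obtain p q where pq: "M$p$q \<noteq> 0" by (metis vec_eq_iff zero_index)
  define x where "x = (\<chi> i. M$i$q / M$p$q)"
  define y where "y = (\<chi> j. M$p$j)"
  have "M$i$j = x$i * y$j" for i j
  proof -
    have "M$i$j * M$p$q = M$i$q * M$p$j" using assms unfolding rank1_def by blast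
    then show ?thesis using pq unfolding x_def y_def by (simp add: field_simps)
  qed
  moreover have "x$p = 1" using pq by (simp add: x_def)
  ultimately show ?thesis by blast
qed

lemma Rset_negligible:
  assumes ginj: "\<And>k0::'c. \<exists>g::'c \<Rightarrow> 3. inj_on g (UNIV - {k0})"
  shows "negligible (Rset :: (real^'c^3^3) set)"
proof -
  define G where "G k0 = (SOME g::'c \<Rightarrow> 3. inj_on g (UNIV - {k0}))" for k0 :: 'c
  have Ginj: "inj_on (G k0) (UNIV - {k0})" for k0
    unfolding G_def using someI_ex[OF ginj[of k0]] .
  define Sk where "Sk k0 = {Q::real^'c^3^3. Q$2$1$k0 = 0} \<union> {Q. Q$2$1$k0 = 1} \<union> {Q. Q$2$2$k0 = 1} \<union> {Q. Q$2$3$k0 = 1}" for k0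
  have negS: "negligible (Sk k0)" for k0
    unfolding Sk_def by (intro negligible_Un hyper_negligible)
  have negI: "negligible (Phi (G k0) k0 ` Sk k0)" for k0
    by (rule negligible_differentiable_image_negligible[OF order_refl negS])
       (simp add: Phi_diff differentiable_at_imp_differentiable_on)
  have sub: "Rset \<subseteq> \<Union> ((\<lambda>k0. Phi (G k0) k0 ` Sk k0) ` UNIV)"
  proof
    fix T :: "real^'c^3^3"
    assume "T \<in> Rset"
    then obtain w where w: "w \<noteq> 0" "rank1 (Nw T w)" unfolding Rset_def by blast
    obtain k0 where k0: "w$k0 \<noteq> 0" using w(1) by (metis vec_eq_iff zero_index)
    define w' where "w' = (1 / w$k0) *\<^sub>R w"
    have w'k0: "w'$k0 = 1" using k0 by (simp add: w'_def)
    have "rank1 (Nw T w')" unfolding w'_def Nw_scale by (rule rank1_scale[OF w(2)])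
    then obtain x y where xy: "\<And>i j. Nw T w' $i$j = x$i * y$j" and xn: "x = 0 \<or> (\<exists>i0. x$i0 = 1)"
      using rank1_factor by blast
    define g where "g = G k0"
    define ws where "ws j = (if \<exists>k. k \<noteq> k0 \<and> g k = j then w'$(THE k. k \<noteq> k0 \<and> g k = j) else 0)" for j
    have wsg: "ws (g k) = w'$k" if "k \<noteq> k0" for k
    proof -
      have "(THE k'. k' \<noteq> k0 \<and> g k' = g k) = k"
        using Ginj[of k0] that unfolding g_def[symmetric] inj_on_def by (intro the_equality) auto
      then show ?thesis using that unfolding ws_def by auto
    qed
    define Q :: "real^'c^3^3" where
      "Q = (\<chi> i j k. if k = k0 then (if i = 1 then ws j else if i = 2 then x$j else y$j) else T$i$j$k)"
    have Q2: "Q$2$j$k0 = x$j" for j by (simp add: Q_def)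
    have Q3: "Q$3$j$k0 = y$j" for j by (simp add: Q_def)
    have Q1: "Q$1$j$k0 = ws j" for j by (simp add: Q_def)
    have Qo: "k \<noteq> k0 \<Longrightarrow> Q$i$j$k = T$i$j$k" for i j k by (simp add: Q_def)
    have QS: "Q \<in> Sk k0"
      using xn
    proof
      assume "x = 0" then show ?thesis unfolding Sk_def by (simp add: Q2)
    next
      assume "\<exists>i0. x$i0 = 1"
      then obtain i0 where "x$i0 = 1" by blast
      then show ?thesis unfolding Sk_def using exhaust_3[of i0] by (auto simp: Q2)
    qed
    have "Phi g k0 Q = T"
    proof -
      have "Phi g k0 Q $ i $ j $ k = T $ i $ j $ k" for i j k
      proof (cases "k = k0")
        case True
        have s1: "(\<Sum>k'\<in>UNIV-{k0}. Q$1$(g k')$k0 * Q$i$j$k') = (\<Sum>k'\<in>UNIV-{k0}. w'$k' * T$i$j$k')"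
          by (intro sum.cong) (auto simp: Q1 wsg Qo)
        have s2: "x$i * y$j = w'$k0 * T$i$j$k0 + (\<Sum>k'\<in>UNIV-{k0}. w'$k' * T$i$j$k')"
          using xy[of i j] unfolding Nw_def by (simp add: sum.remove[of UNIV k0])
        show ?thesis using True s1 s2 w'k0 by (simp add: Phi_def Q2 Q3)
      next
        case False
        then show ?thesis by (simp add: Phi_def Qo)
      qed
      then show ?thesis by (simp add: vec_eq_iff)
    qed
    then show "T \<in> \<Union> ((\<lambda>k0. Phi (G k0) k0 ` Sk k0) ` UNIV)"
      using QS unfolding g_def by blast
  qed
  show ?thesis
    by (rule negligible_subset[OF _ sub]) (intro negligible_Union, auto intro: negI)
qed



lemma main_generic:
  fixes k1 k2 k3 :: "'c::finite"
  assumes k: "k1 \<noteq> k2" "k1 \<noteq> k3" "k2 \<noteq> k3"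
    and ginj: "\<And>k0::'c. \<exists>g::'c \<Rightarrow> 3. inj_on g (UNIV - {k0})"
  shows "{r. typical_subrank TYPE(real^'c^3^3) r} = {2}"
proof -
  have negR: "negligible (Rset :: (real^'c^3^3) set)" by (rule Rset_negligible[OF ginj])
  have nosub: "\<not> U \<subseteq> (Rset :: (real^'c^3^3) set)" if "open U" "U \<noteq> {}" for U
    using open_not_negligible[OF that] negligible_subset[OF negR] by blast
  have typ2: "typical_subrank TYPE(real^'c^3^3) 2"
  proof -
    define Ts :: "real^'c^3^3" where
      "Ts = (\<chi> i j k. if (i = 1 \<and> j = 1 \<and> k = k1) \<or> (i = 2 \<and> j = 2 \<and> k = k2) then 1 else 0)"
    define U where "U = ball Ts (1/20) - Rset"
    have "open U" unfolding U_def using Rset_closed by (intro open_Diff) auto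
    moreover have "U \<noteq> {}" using nosub[of "ball Ts (1/20)"] unfolding U_def by auto
    moreover have "subrank T = 2" if "T \<in> U" for T
    proof -
      have "dist T Ts < 1/20" using that unfolding U_def by (simp add: dist_commute)
      then have "tensor_restricts_to_unit T 2" using G2_open_piece[OF k(1)] unfolding Ts_def by blast
      moreover have "\<not> tensor_restricts_to_unit T 3" using that S3_sub_R unfolding U_def by blast
      ultimately show ?thesis by (simp add: subrank_eq numeral_3_eq_3)
    qed
    ultimately show ?thesis unfolding typical_subrank_def
      by (intro exI[of _ U] conjI ballI) auto
  qed
  have only2: "r = 2" if "typical_subrank TYPE(real^'c^3^3) r" for r
  proof -
    note th = that[unfolded typical_subrank_def]
    obtain U :: "(real^'c^3^3) set" where U: "open U" "U \<noteq> {}" "\<And>T. T \<in> U \<Longrightarrow> subrank T = r"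
      using th by auto
    obtain T0 where T0: "T0 \<in> U" using U(2) by blast
    obtain e where e: "e > 0" "ball T0 e \<subseteq> U" using U(1) T0 open_contains_ball by blast
    show "r = 2"
    proof (rule ccontr)
      assume "r \<noteq> 2"
      then consider "r \<le> 1" | "r \<ge> 3" by linarith
      then show False
      proof cases
        case 1
        obtain T where T: "dist T T0 < e" "tensor_restricts_to_unit T 2" using G2_dense[OF k e(1)] by blast
        then have "T \<in> U" using e(2) by (auto simp: dist_commute)
        then have "\<not> tensor_restricts_to_unit T (Suc r)" using U(3)[OF \<open>T \<in> U\<close>] subrank_eq[of T r] by simp
        moreover have "tensor_restricts_to_unit T (Suc r)" using restricts_mono[OF T(2), of "Suc r"] 1 by simp
        ultimately show False by blast
      next
        case 2
        have "U \<subseteq> Rset"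
        proof
          fix T assume "T \<in> U"
          then have "tensor_restricts_to_unit T r" using U(3)[OF \<open>T \<in> U\<close>] subrank_eq[of T r] by simp
          then have "tensor_restricts_to_unit T 3" using restricts_mono[of T r 3] 2 by simp
          then show "T \<in> Rset" by (rule S3_sub_R)
        qed
        then show False using nosub[OF U(1,2)] by blast
      qed
    qed
  qed
  show ?thesis using typ2 only2 by blast
qed

lemma ginj3: "\<exists>g::3 \<Rightarrow> 3. inj_on g (UNIV - {k0})"
  by (rule exI[of _ id]) simp

lemma ginj4: "\<exists>g::4 \<Rightarrow> 3. inj_on g (UNIV - {k0})"
proof -
  define h :: "4 \<Rightarrow> 3" where "h k = (if k = 1 then 1 else if k = 2 then 2 else if k = 3 then 3 else 1)" for k
  define g where "g k = (if k = 4 then h k0 else h k)" for k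
  have "inj_on g (UNIV - {k0})"
  proof (rule inj_onI)
    fix a b assume ab: "a \<in> UNIV - {k0}" "b \<in> UNIV - {k0}" "g a = g b"
    show "a = b"
      using exhaust_4[of k0] exhaust_4[of a] exhaust_4[of b] ab by (auto simp: g_def h_def)
  qed
  then show ?thesis by blast
qed

theorem corollary4p6:
  shows "{r. typical_subrank TYPE(real^3^3^3) r} = {2}
       \<and> {r. typical_subrank TYPE(real^4^3^3) r} = {2}"
proof
  show "{r. typical_subrank TYPE(real^3^3^3) r} = {2}"
    by (rule main_generic[of 1 2 3]) (simp_all add: ginj3)
  show "{r. typical_subrank TYPE(real^4^3^3) r} = {2}"
    by (rule main_generic[of 1 2 3]) (simp_all add: ginj4)
qed


end
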